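(* For all constraint sets $C,\tilde C$ and substitutions $\sigma$: if $C\to^{*\,\sigma}\tilde C$ and $\tilde C$ is in normal form, then there exists a unique substitution $\sigma_c$ with $\sigma_c\vdash_{\min} C$.
   Context: There are two binding times $\mathsf{S}$, $\mathsf{D}$; $\mathcal{L}$ is a finite set of labels disjoint from them. A binding-time expression is a binding time or a label; a constraint is a formal pair $B_1\preceq B_2$; a constraint set is a finite set of constraints, with $\mathrm{labels}(C)=\{l\in\mathcal{L}:\exists B.\ l\preceq B\in C\text{ or }B\preceq l\in C\}$. $C$ is in normal form if every $c\in C$ has one of the forms $\mathsf{S}\preceq l$, $l\preceq\mathsf{D}$, $l\preceq\tilde l$ with $l,\tilde l\in\mathcal{L}$. Satisfaction $\vdash b_1\preceq b_2$ holds exactly for $\mathsf{S}\preceq\mathsf{D}$, $\mathsf{S}\preceq\mathsf{S}$, $\mathsf{D}\preceq\mathsf{D}$. A substitution is a finite partial map $\sigma:\mathcal{L}\rightharpoonup\{\mathsf{S},\mathsf{D}\}$, extended to binding-time expressions as the identity on binding times and on labels outside its domain; $\sigma(C)=\{\sigma(B_1)\preceq\sigma(B_2): B_1\preceq B_2\in C\}$. The extension $\sigma\oplus\hat\sigma$ has domain $\mathrm{dom}(\sigma)\cup\mathrm{dom}(\hat\sigma)$ and maps $l$ to $\sigma(l)$ if $l\in\mathrm{dom}(\sigma)$, else to $\hat\sigma(l)$. $\sigma\vdash C$ means: for every $B_1\preceq B_2\in C$, $\sigma(B_1),\sigma(B_2)$ are binding times and $\vdash\sigma(B_1)\preceq\sigma(B_2)$.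 $\sigma_c\vdash_{\min}C$ means: $\sigma_c\vdash C$, $\mathrm{dom}(\sigma_c)=\mathrm{labels}(C)$, and for every $\sigma\vdash C$ and $l\in\mathrm{labels}(C)$, $\vdash\sigma_c(l)\preceq\sigma(l)$. Write $[\,]$ for the empty substitution and $[l\mapsto b]$ for the substitution with domain $\{l\}$. The normalization relation $C\to^{\sigma}\tilde C$ holds if $C=C_0\uplus\{c\}$ and one of: (a) $c=\mathsf{S}\preceq\mathsf{S}$, $\sigma=[\,]$, $\tilde C=C_0$; (b) $c=\mathsf{S}\preceq\mathsf{D}$, $\sigma=[\,]$, $\tilde C=C_0$; (c) $c=\mathsf{D}\preceq\mathsf{D}$, $\sigma=[\,]$, $\tilde C=C_0$; (d) $c=l\preceq\mathsf{S}$ with $l\in\mathcal{L}$, $\sigma=[l\mapsto\mathsf{S}]$, $\tilde C=[l\mapsto\mathsf{S}](C_0)$; (e) $c=\mathsf{D}\preceq l$ with $l\in\mathcal{L}$, $\sigma=[l\mapsto\mathsf{D}]$, $\tilde C=[l\mapsto\mathsf{D}](C_0)$. Exhaustive application $C\to^{*\,\sigma}\tilde C$ means there exist $k\ge 0$ and $C=\tilde C_0\to^{\sigma_1}\tilde C_1\to^{\sigma_2}\cdots\to^{\sigma_k}\tilde C_k=\tilde C$ with $\sigma=\sigma_1\oplus\cdots\oplus\sigma_k$, and no normalization step applies to $\tilde C$. *)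

theory Defs
  imports Main
begin

datatype bt = S | D

datatype 'l bte = BT bt | Lab 'l

type_synonym 'l constr = "'l bte \<times> 'l bte"
type_synonym 'l subst = "'l \<rightharpoonup> bt"

fun leq_bt :: "bt \<Rightarrow> bt \<Rightarrow> bool" where
  "leq_bt S D = True"
| "leq_bt S S = True"
| "leq_bt D D = True"
| "leq_bt D S = False"

definition labels :: "'l constr set \<Rightarrow> 'l set" where
  "labels C = {l. \<exists>B. (Lab l, B) \<in> C \<or> (B, Lab l) \<in> C}"

definition normal_form :: "'l constr set \<Rightarrow> bool" where
  "normal_form C \<longleftrightarrow> (\<forall>c\<in>C. (\<exists>l. c = (BT S, Lab l)) \<or> (\<exists>l. c = (Lab l, BT D))
       \<or> (\<exists>l l'. c = (Lab l, Lab l')))"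

fun app_subst :: "'l subst \<Rightarrow> 'l bte \<Rightarrow> 'l bte" where
  "app_subst \<sigma> (BT b) = BT b"
| "app_subst \<sigma> (Lab l) = (case \<sigma> l of Some b \<Rightarrow> BT b | None \<Rightarrow> Lab l)"

definition subst_cs :: "'l subst \<Rightarrow> 'l constr set \<Rightarrow> 'l constr set" where
  "subst_cs \<sigma> C = (\<lambda>(B1, B2). (app_subst \<sigma> B1, app_subst \<sigma> B2)) ` C"

text \<open>Extension sigma (+) sigma': sigma takes precedence.\<close>
definition ext_subst :: "'l subst \<Rightarrow> 'l subst \<Rightarrow> 'l subst" where
  "ext_subst \<sigma> \<sigma>' = \<sigma>' ++ \<sigma>"

definition sat :: "'l subst \<Rightarrow> 'l constr set \<Rightarrow> bool" where
  "sat \<sigma> C \<longleftrightarrow> (\<forall>(B1, B2)\<in>C. \<exists>b1 b2. app_subst \<sigma> B1 = BT b1 \<and> app_subst \<sigma> B2 = BT b2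
        \<and> leq_bt b1 b2)"

definition min_sol :: "'l subst \<Rightarrow> 'l constr set \<Rightarrow> bool" where
  "min_sol \<sigma>c C \<longleftrightarrow> sat \<sigma>c C \<and> dom \<sigma>c = labels C \<and>
     (\<forall>\<sigma>. sat \<sigma> C \<longrightarrow> (\<forall>l\<in>labels C. \<exists>b1 b2. \<sigma>c l = Some b1 \<and> \<sigma> l = Some b2 \<and> leq_bt b1 b2))"

text \<open>One normalization step C ->^sigma C'. C = C0 disjoint-union {c} means C0 = C - {c}.\<close>
inductive norm_step :: "'l constr set \<Rightarrow> 'l subst \<Rightarrow> 'l constr set \<Rightarrow> bool" where
  a: "(BT S, BT S) \<in> C \<Longrightarrow> norm_step C Map.empty (C - {(BT S, BT S)})"
| b: "(BT S, BT D) \<in> C \<Longrightarrow> norm_step C Map.empty (C - {(BT S, BT D)})"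
| c: "(BT D, BT D) \<in> C \<Longrightarrow> norm_step C Map.empty (C - {(BT D, BT D)})"
| d: "(Lab l, BT S) \<in> C \<Longrightarrow>
      norm_step C [l \<mapsto> S] (subst_cs [l \<mapsto> S] (C - {(Lab l, BT S)}))"
| e: "(BT D, Lab l) \<in> C \<Longrightarrow>
      norm_step C [l \<mapsto> D] (subst_cs [l \<mapsto> D] (C - {(BT D, Lab l)}))"

inductive norm_steps :: "'l constr set \<Rightarrow> 'l subst \<Rightarrow> 'l constr set \<Rightarrow> bool" where
  refl: "norm_steps C Map.empty C"
| step: "norm_steps C \<sigma> C' \<Longrightarrow> norm_step C' \<sigma>' C'' \<Longrightarrow> norm_steps C (ext_subst \<sigma> \<sigma>') C''"

definition norm_exh :: "'l constr set \<Rightarrow> 'l subst \<Rightarrow> 'l constr set \<Rightarrow> bool" where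
  "norm_exh C \<sigma> C' \<longleftrightarrow> norm_steps C \<sigma> C' \<and> \<not> (\<exists>\<sigma>' C''. norm_step C' \<sigma>' C'')"

end

theory Submission
  imports Defs
begin

lemma app_comp: "app_subst \<tau> (app_subst [l \<mapsto> b] B) = app_subst (\<tau>(l \<mapsto> b)) B"
  by (cases B) auto

lemma sat_mem: "sat \<tau> C \<Longrightarrow> (B1,B2) \<in> C \<Longrightarrow> \<exists>b1 b2. app_subst \<tau> B1 = BT b1 \<and> app_subst \<tau> B2 = BT b2 \<and> leq_bt b1 b2"
  unfolding sat_def by blast
lemma satI: "(\<And>B1 B2. (B1,B2) \<in> C \<Longrightarrow> \<exists>b1 b2. app_subst \<tau> B1 = BT b1 \<and> app_subst \<tau> B2 = BT b2 \<and> leq_bt b1 b2) \<Longrightarrow> sat \<tau> C"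
  unfolding sat_def by blast
lemma sat_triv: "sat \<tau> (C - {(BT x, BT y)}) \<Longrightarrow> leq_bt x y \<Longrightarrow> sat \<tau> C"
proof (rule satI)
  fix B1 B2 assume s: "sat \<tau> (C - {(BT x, BT y)})" and xy: "leq_bt x y" and m: "(B1,B2) \<in> C"
  show "\<exists>b1 b2. app_subst \<tau> B1 = BT b1 \<and> app_subst \<tau> B2 = BT b2 \<and> leq_bt b1 b2"
  proof (cases "(B1,B2) = (BT x, BT y)")
    case True then show ?thesis using xy by simp
  next
    case False then show ?thesis using sat_mem[OF s, of B1 B2] m by blast
  qed
qed

lemma step_back: "norm_step C s C'' \<Longrightarrow> sat \<tau> C'' \<Longrightarrow> \<exists>\<tau>'. sat \<tau>' C"
proof (induction rule: norm_step.induct)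
  case (a C) then show ?case using sat_triv[of \<tau> C S S] by auto
next
  case (b C) then show ?case using sat_triv[of \<tau> C S D] by auto
next
  case (c C) then show ?case using sat_triv[of \<tau> C D D] by auto
next
  case (d l C)
  show ?case
  proof (rule exI[of _ "\<tau>(l \<mapsto> S)"], rule satI)
    fix B1 B2 assume m: "(B1, B2) \<in> C"
    show "\<exists>b1 b2. app_subst (\<tau>(l \<mapsto> S)) B1 = BT b1 \<and> app_subst (\<tau>(l \<mapsto> S)) B2 = BT b2 \<and> leq_bt b1 b2"
    proof (cases "(B1,B2) = (Lab l, BT S)")
      case True then show ?thesis by auto
    next
      case False
      then have "(app_subst [l \<mapsto> S] B1, app_subst [l \<mapsto> S] B2) \<in> subst_cs [l \<mapsto> S] (C - {(Lab l, BT S)})"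
        using m unfolding subst_cs_def by force
      from sat_mem[OF d.prems this] show ?thesis by (simp add: app_comp)
    qed
  qed
next
  case (e l C)
  show ?case
  proof (rule exI[of _ "\<tau>(l \<mapsto> D)"], rule satI)
    fix B1 B2 assume m: "(B1, B2) \<in> C"
    show "\<exists>b1 b2. app_subst (\<tau>(l \<mapsto> D)) B1 = BT b1 \<and> app_subst (\<tau>(l \<mapsto> D)) B2 = BT b2 \<and> leq_bt b1 b2"
    proof (cases "(B1,B2) = (BT D, Lab l)")
      case True then show ?thesis by auto
    next
      case False
      then have "(app_subst [l \<mapsto> D] B1, app_subst [l \<mapsto> D] B2) \<in> subst_cs [l \<mapsto> D] (C - {(BT D, Lab l)})"
        using m unfolding subst_cs_def by force
      from sat_mem[OF e.prems this] show ?thesis by (simp add: app_comp)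
    qed
  qed
qed

lemma steps_back: "norm_steps C s C' \<Longrightarrow> sat \<tau> C' \<Longrightarrow> \<exists>\<tau>'. sat \<tau>' C"
proof (induction arbitrary: \<tau> rule: norm_steps.induct)
  case (refl C) then show ?case by blast
next
  case (step C \<sigma> C' \<sigma>' C'')
  then obtain \<tau>' where "sat \<tau>' C'" using step_back by blast
  then show ?case using step.IH by blast
qed

lemma nf_sat: "normal_form C \<Longrightarrow> sat (\<lambda>_. Some D) C"
  apply (rule satI) unfolding normal_form_def by fastforce

lemma leqS[simp]: "leq_bt S x" by (cases x) auto
lemma leqD[simp]: "leq_bt D x \<longleftrightarrow> x = D" by (cases x) auto


lemma sat_lab: "sat \<tau> C \<Longrightarrow> l \<in> labels C \<Longrightarrow> \<exists>b. \<tau> l = Some b"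
  unfolding labels_def
  apply clarify
  apply (erule disjE)
   apply (drule (1) sat_mem, auto split: option.splits)
  apply (drule (1) sat_mem, auto split: option.splits)
  done

lemma exists_min:
  assumes "sat \<tau>0 C"
  shows "\<exists>\<sigma>c. min_sol \<sigma>c C"
proof -
  define F where "F l = (\<forall>\<tau>. sat \<tau> C \<longrightarrow> \<tau> l = Some D)" for l
  define \<sigma>c where "\<sigma>c l = (if l \<in> labels C then Some (if F l then D else S) else None)" for l
  have app: "app_subst \<sigma>c (Lab l) = BT (if F l then D else S)" if "l \<in> labels C" for l
    using that by (simp add: \<sigma>c_def)
  have sat: "sat \<sigma>c C"
  proof (rule satI)
    fix B1 B2 assume m: "(B1, B2) \<in> C"
    show "\<exists>b1 b2. app_subst \<sigma>c B1 = BT b1 \<and> app_subst \<sigma>c B2 = BT b2 \<and> leq_bt b1 b2"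
    proof (cases B1; cases B2)
      fix b1 b2 assume "B1 = BT b1" "B2 = BT b2"
      then show ?thesis using sat_mem[OF assms m] by auto
    next
      fix b1 l assume h: "B1 = BT b1" "B2 = Lab l"
      then have l: "l \<in> labels C" using m unfolding labels_def by blast
      show ?thesis
      proof (cases b1)
        case S then show ?thesis using h app[OF l] by auto
      next
        case D
        have "F l" unfolding F_def
        proof clarify
          fix \<tau> assume "sat \<tau> C"
          from sat_mem[OF this m] h D show "\<tau> l = Some D" by (auto split: option.splits)
        qed
        then show ?thesis using h app[OF l] D by auto
      qed
    next
      fix l b2 assume h: "B1 = Lab l" "B2 = BT b2"
      then have l: "l \<in> labels C" using m unfolding labels_def by blast
      show ?thesis
      proof (cases "F l")
        case False then show ?thesis using h app[OF l] by auto
      next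
        case True
        have "\<tau>0 l = Some D" using True assms unfolding F_def by blast
        with sat_mem[OF assms m] h have "b2 = D" by auto
        then show ?thesis using h app[OF l] True by auto
      qed
    next
      fix l l' assume h: "B1 = Lab l" "B2 = Lab l'"
      then have l: "l \<in> labels C" "l' \<in> labels C" using m unfolding labels_def by blast+
      show ?thesis
      proof (cases "F l")
        case False then show ?thesis using h app[OF l(1)] app[OF l(2)] by auto
      next
        case True
        have "F l'" unfolding F_def
        proof clarify
          fix \<tau> assume s: "sat \<tau> C"
          then have "\<tau> l = Some D" using True unfolding F_def by blast
          with sat_mem[OF s m] h show "\<tau> l' = Some D" by (auto split: option.splits)
        qed
        then show ?thesis using h app[OF l(1)] app[OF l(2)] True by auto
      qed
    qed
  qed
  have dom: "dom \<sigma>c = labels C" unfolding \<sigma>c_def dom_def by auto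
  have mn: "\<forall>\<tau>. sat \<tau> C \<longrightarrow> (\<forall>l\<in>labels C. \<exists>b1 b2. \<sigma>c l = Some b1 \<and> \<tau> l = Some b2 \<and> leq_bt b1 b2)"
  proof (intro allI impI ballI)
    fix \<tau> l assume s: "sat \<tau> C" and l: "l \<in> labels C"
    obtain b where b: "\<tau> l = Some b" using sat_lab[OF s l] by blast
    show "\<exists>b1 b2. \<sigma>c l = Some b1 \<and> \<tau> l = Some b2 \<and> leq_bt b1 b2"
    proof (cases "F l")
      case True
      then have "\<tau> l = Some D" using s unfolding F_def by blast
      then show ?thesis using True l unfolding \<sigma>c_def by simp
    next
      case False
      then show ?thesis using b l unfolding \<sigma>c_def by simp
    qed
  qed
  show ?thesis using sat dom mn unfolding min_sol_def by blast
qed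

lemma min_unique:
  assumes "min_sol a C" "min_sol b C" shows "a = b"
proof
  fix l
  show "a l = b l"
  proof (cases "l \<in> labels C")
    case True
    from assms have "sat b C" "sat a C" unfolding min_sol_def by auto
    have m1: "\<forall>\<sigma>. sat \<sigma> C \<longrightarrow> (\<forall>l\<in>labels C. \<exists>b1 b2. a l = Some b1 \<and> \<sigma> l = Some b2 \<and> leq_bt b1 b2)"
      using assms(1) unfolding min_sol_def by blast
    have m2: "\<forall>\<sigma>. sat \<sigma> C \<longrightarrow> (\<forall>l\<in>labels C. \<exists>b1 b2. b l = Some b1 \<and> \<sigma> l = Some b2 \<and> leq_bt b1 b2)"
      using assms(2) unfolding min_sol_def by blast
    obtain x y where xy: "a l = Some x" "b l = Some y" "leq_bt x y"
      using m1 \<open>sat b C\<close> True by blast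
    obtain x' y' where xy': "b l = Some x'" "a l = Some y'" "leq_bt x' y'"
      using m2 \<open>sat a C\<close> True by blast
    from xy xy' have "x' = y" "y' = x" by simp_all
    with xy xy' have "a l = Some x" "b l = Some y" "leq_bt x y" "leq_bt y x" by simp_all
    then show ?thesis by (cases x; cases y) auto
  next
    case False
    with assms have "l \<notin> dom a" "l \<notin> dom b" unfolding min_sol_def by auto
    then show ?thesis by (simp add: domIff)
  qed
qed

theorem theorem2:
  fixes C C' :: "('l::finite) constr set" and \<sigma> :: "'l subst"
  assumes "finite C" and "finite C'"
    and "norm_exh C \<sigma> C'"
    and "normal_form C'"
  shows "\<exists>!\<sigma>c. min_sol \<sigma>c C"
proof -
  obtain \<tau> where "sat \<tau> C"
    using steps_back[OF _ nf_sat[OF assms(4)]] assms(3) unfolding norm_exh_def by blast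
  then obtain m where "min_sol m C" using exists_min by blast
  then show ?thesis using min_unique by blast
qed

end
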